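(* Let $a\in(0,0.5)$. Let $f(\phi\mid \mathrm{HS+})$ and $f(\phi\mid\mathrm{HTHS+})$ denote the univariate marginal prior densities of $\phi$ under the HS+ and HTHS+ priors (defined in the context). Then there exist positive numbers $C_a$ and $D_a$ such that for all $\phi\neq 0$, $$C_a\, f(\phi\mid \mathrm{HS+})\le \frac{a\,2^{a-1}}{\sqrt{\pi}\,|\phi|^{1+2a}}\,\Gamma_L\!\left(0.5+a,\tfrac{\phi^2}{2}\right)+\frac{a\,2^{-a-1}}{\sqrt{\pi}\,|\phi|^{1-2a}}\,\Gamma_U\!\left(0.5-a,\tfrac{\phi^2}{2}\right)\le D_a\, f(\phi\mid \mathrm{HTHS+}).$$
   Context: Under both priors, $\phi\mid\gamma\sim\mathcal{N}(0,1/\gamma)$ with $\gamma>0$. Under HS+, $\gamma$ has density $\pi(\gamma)=\frac{\gamma^{-1/2}\log\gamma}{\pi^2(\gamma-1)}$ on $(0,\infty)$. Under HTHS+, $\gamma$ has the log-Cauchy density $\pi(\gamma)=\frac{2}{\gamma\left((\log\gamma)^2+4\pi^2\right)}$ on $(0,\infty)$. The marginal density of $\phi$ is $f(\phi)=\int_0^\infty \mathcal{N}(\phi\mid 0,1/\gamma)\pi(\gamma)\,\mathrm{d}\gamma$. $\Gamma_L(s,x)=\int_0^x t^{s-1}e^{-t}\,\mathrm{d}t$ and $\Gamma_U(s,x)=\int_x^\infty t^{s-1}e^{-t}\,\mathrm{d}t$ are the lower and upper incomplete gamma functions. *)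

theory Defs
  imports "HOL-Analysis.Analysis"
begin

definition normal_prec_density :: "real \<Rightarrow> real \<Rightarrow> real" where
  "normal_prec_density \<gamma> \<phi> = sqrt (\<gamma> / (2 * pi)) * exp (- \<gamma> * \<phi>\<^sup>2 / 2)"

text \<open>HS+ mixing density of gamma on (0,infinity) (value at gamma = 1 is a null set).\<close>
definition hs_plus_gamma_density :: "real \<Rightarrow> real" where
  "hs_plus_gamma_density \<gamma> = \<gamma> powr (-1/2) * ln \<gamma> / (pi\<^sup>2 * (\<gamma> - 1))"

text \<open>HTHS+ (log-Cauchy) mixing density of gamma on (0,infinity).\<close>
definition hths_plus_gamma_density :: "real \<Rightarrow> real" where
  "hths_plus_gamma_density \<gamma> = 2 / (\<gamma> * ((ln \<gamma>)\<^sup>2 + 4 * pi\<^sup>2))"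

definition f_HS_plus :: "real \<Rightarrow> real" where
  "f_HS_plus \<phi> = (LBINT \<gamma>:{0<..}. normal_prec_density \<gamma> \<phi> * hs_plus_gamma_density \<gamma>)"

definition f_HTHS_plus :: "real \<Rightarrow> real" where
  "f_HTHS_plus \<phi> = (LBINT \<gamma>:{0<..}. normal_prec_density \<gamma> \<phi> * hths_plus_gamma_density \<gamma>)"

definition lower_inc_gamma :: "real \<Rightarrow> real \<Rightarrow> real" where
  "lower_inc_gamma s x = (LBINT t:{0<..<x}. t powr (s - 1) * exp (- t))"

definition upper_inc_gamma :: "real \<Rightarrow> real \<Rightarrow> real" where
  "upper_inc_gamma s x = (LBINT t:{x<..}. t powr (s - 1) * exp (- t))"

end

theory Submission
  imports Defs
begin


lemma int_powr_exp:
  fixes c s :: real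
  assumes "-1 < c" "c \<le> 0" "0 < s"
  shows "set_integrable lborel {0<..} (\<lambda>x. x powr c * exp (- s * x))"
proof -
  have a1: "(\<lambda>x. x powr c) absolutely_integrable_on {0<..1}"
    by (intro nonnegative_absolutely_integrable_1 integrable_on_powr_from_0') (use assms in auto)
  have "(\<lambda>x. exp (- s * x)) integrable_on {1..}"
    using integrable_on_exp_minus_to_infinity[of s 1] assms by simp
  hence "(\<lambda>x. exp (- s * x)) absolutely_integrable_on {1..}"
    by (intro nonnegative_absolutely_integrable_1) auto
  hence a2: "(\<lambda>x. exp (- s * x)) absolutely_integrable_on {1<..}"
    by (rule set_integrable_subset) auto
  have i1: "integrable lebesgue (\<lambda>x. indicator {0<..1} x *\<^sub>R x powr c + indicator {1<..} x *\<^sub>R exp (- s * x))"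
    using a1 a2 unfolding set_integrable_def by (rule Bochner_Integration.integrable_add)
  have "integrable lebesgue (\<lambda>x. indicator {0<..} x *\<^sub>R (x powr c * exp (- s * x)))"
  proof (rule Bochner_Integration.integrable_bound[OF i1 _ AE_I2])
    show "(\<lambda>x. indicator {0<..} x *\<^sub>R (x powr c * exp (- s * x))) \<in> borel_measurable lebesgue"
      by (intro measurable_completion) measurable
    fix x :: real
    show "norm (indicator {0<..} x *\<^sub>R (x powr c * exp (- s * x))) \<le>
          norm (indicator {0<..1} x *\<^sub>R x powr c + indicator {1<..} x *\<^sub>R exp (- s * x))"
    proof (cases "x \<le> 0")
      case True thus ?thesis by (simp add: indicator_def)
    next
      case False
      show ?thesis
      proof (cases "x \<le> 1")
        case True
        have "exp (- s * x) \<le> 1" using False assms by simp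
        hence "x powr c * exp (- s * x) \<le> x powr c" 
          by (simp add: mult_left_le)
        thus ?thesis using True False by (simp add: indicator_def)
      next
        case F2: False
        have "x powr c \<le> 1" using F2 assms powr_mono[of c 0 x] by simp 
        hence "x powr c * exp (- s * x) \<le> exp (- s * x)" 
          by (simp add: mult_left_le_one_le mult_le_cancel_right1)
        thus ?thesis using F2 False by (simp add: indicator_def)
      qed
    qed
  qed
  thus ?thesis unfolding set_integrable_def
    by (subst (asm) integrable_completion) measurable
qed



lemma sub_gen:
  fixes s p :: real and A B :: "real set"
  assumes "0 < s" and AB: "\<And>x. s * x \<in> A \<longleftrightarrow> x \<in> B" and B: "B \<subseteq> {0<..}"
  shows "(LBINT t:A. t powr (p - 1) * exp (- t)) = s powr p * (LBINT x:B. x powr (p - 1) * exp (- s * x))"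
proof -
  have "(LBINT t:A. t powr (p - 1) * exp (- t)) = (\<integral>t. indicator A t * (t powr (p - 1) * exp (- t)) \<partial>lborel)"
    by (simp add: set_lebesgue_integral_def)
  also have "\<dots> = \<bar>s\<bar> *\<^sub>R (\<integral>x. indicator A (0 + s * x) * ((0 + s * x) powr (p - 1) * exp (- (0 + s * x))) \<partial>lborel)"
    using assms by (intro lborel_integral_real_affine) simp
  also have "(\<lambda>x. indicator A (0 + s * x) * ((0 + s * x) powr (p - 1) * exp (- (0 + s * x))))
      = (\<lambda>x. s powr (p - 1) * (indicator B x * (x powr (p - 1) * exp (- s * x))))"
  proof
    fix x
    show "indicator A (0 + s * x) * ((0 + s * x) powr (p - 1) * exp (- (0 + s * x))) =
          s powr (p - 1) * (indicator B x * (x powr (p - 1) * exp (- s * x)))"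
    proof (cases "x \<in> B")
      case True
      hence "x > 0" using B by auto
      thus ?thesis using True AB[of x] assms by (simp add: indicator_def powr_mult)
    next
      case False thus ?thesis using AB[of x] by (simp add: indicator_def)
    qed
  qed
  also have "\<bar>s\<bar> *\<^sub>R (\<integral>x. s powr (p - 1) * (indicator B x * (x powr (p - 1) * exp (- s * x))) \<partial>lborel)
     = s * s powr (p - 1) * (LBINT x:B. x powr (p - 1) * exp (- s * x))"
    using assms by (simp add: set_lebesgue_integral_def)
  also have "s * s powr (p - 1) = s powr p"
    using assms by (simp add: powr_diff)
  finally show ?thesis .
qed

lemma sub_lower:
  fixes s p :: real assumes "0 < s"
  shows "lower_inc_gamma p s = s powr p * (LBINT x:{0<..<1}. x powr (p - 1) * exp (- s * x))"
  unfolding lower_inc_gamma_def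
  by (rule sub_gen) (use assms in \<open>auto simp: zero_less_mult_iff\<close>)

lemma sub_upper:
  fixes s p :: real assumes "0 < s"
  shows "upper_inc_gamma p s = s powr p * (LBINT x:{1<..}. x powr (p - 1) * exp (- s * x))"
  unfolding upper_inc_gamma_def
  by (rule sub_gen) (use assms in \<open>auto\<close>)



lemma lemB:
  fixes b w :: real
  assumes "0 < b" "b < 1" "0 < w"
  shows "w * exp (b * w) \<le> (exp 1 + 2 / (1 - b)) * (exp w - 1)"
proof (cases "w \<le> 1")
  case True
  have "exp (b * w) \<le> exp 1" using assms True by (simp add: mult_le_one)
  hence "w * exp (b * w) \<le> w * exp 1" using assms by simp
  also have "\<dots> \<le> w * (exp 1 + 2 / (1 - b))" using assms by simp
  also have "\<dots> \<le> (exp w - 1) * (exp 1 + 2 / (1 - b))"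
  proof (rule mult_right_mono)
    show "w \<le> exp w - 1" using exp_ge_add_one_self[of w] by linarith
    show "0 \<le> exp 1 + 2 / (1 - b)" using assms by (intro add_nonneg_nonneg) auto
  qed
  finally show ?thesis by (simp add: mult.commute)
next
  case False
  define c where "c = 1 - b"
  have c: "0 < c" using assms c_def by simp
  have ew: "exp w \<le> 2 * (exp w - 1)"
  proof -
    have "exp 1 \<le> exp w" using False by simp
    moreover have "2 \<le> exp (1::real)" using exp_ge_add_one_self[of 1] by simp
    ultimately have "2 \<le> exp w" by (rule order_trans[rotated])
    thus ?thesis by simp
  qed
  have "1 + c * w \<le> exp (c * w)" by (rule exp_ge_add_one_self)
  hence "c * w \<le> exp (c * w)" by linarith
  hence "w \<le> exp (c * w) / c" using c by (simp add: pos_le_divide_eq mult.commute)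
  hence "w * exp (b * w) \<le> exp (c * w) / c * exp (b * w)" by (rule mult_right_mono) simp
  also have "\<dots> = exp w / c"
  proof -
    have "c * w + b * w = (c + b) * w" by (simp add: distrib_right)
    hence "c * w + b * w = w" using c_def by simp
    thus ?thesis by (simp add: exp_add[symmetric])
  qed
  also have "exp w / c \<le> 2 * (exp w - 1) / c" using ew c by (simp add: divide_right_mono)
  also have "\<dots> = (2 / (1 - b)) * (exp w - 1)" using c_def by simp
  also have "\<dots> \<le> (exp 1 + 2 / (1 - b)) * (exp w - 1)"
    using False by (intro mult_right_mono) auto
  finally show ?thesis .
qed

lemma lemA2:
  fixes a g :: real
  assumes "0 < a" "a < 1/2" "1 < g"
  shows "ln g / (g - 1) \<le> (exp 1 + 2 / (1/2 - a)) * g powr (- a - 1/2)"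
proof -
  define w where "w = ln g"
  have w: "0 < w" "g = exp w" using assms w_def by auto
  have B: "w * exp ((a + 1/2) * w) \<le> (exp 1 + 2 / (1/2 - a)) * (exp w - 1)"
    using lemB[of "a + 1/2" w] assms w by simp
  have gp: "g powr (- a - 1/2) = exp (- ((a + 1/2) * w))"
    using w(2) by (simp add: powr_def algebra_simps)
  have e1: "exp w - 1 > 0" using w by simp
  have "w = w * exp ((a + 1/2) * w) * exp (- ((a + 1/2) * w))"
    by (simp add: exp_minus field_simps)
  also have "\<dots> \<le> (exp 1 + 2 / (1/2 - a)) * (exp w - 1) * exp (- ((a + 1/2) * w))"
    using B by (intro mult_right_mono) auto
  finally have "w \<le> (exp 1 + 2 / (1/2 - a)) * exp (- ((a + 1/2) * w)) * (exp w - 1)"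
    by (simp only: ac_simps)
  hence "w / (exp w - 1) \<le> (exp 1 + 2 / (1/2 - a)) * exp (- ((a + 1/2) * w))"
    using e1 by (simp add: pos_divide_le_eq)
  moreover have eq: "ln g / (g - 1) = w / (exp w - 1)" using assms by (simp add: w_def)
  ultimately show ?thesis by (simp only: eq gp)
qed

lemma lemA1:
  fixes a g :: real
  assumes "0 < a" "a < 1/2" "0 < g" "g < 1"
  shows "ln g / (g - 1) \<le> (exp 1 + 2 / (1/2 - a)) * g powr (a - 1/2)"
proof -
  define w where "w = - ln g"
  have w: "0 < w" "g = exp (- w)" using assms w_def by auto
  have B: "w * exp ((a + 1/2) * w) \<le> (exp 1 + 2 / (1/2 - a)) * (exp w - 1)"
    using lemB[of "a + 1/2" w] assms w by simp
  have gp: "g powr (a - 1/2) = exp ((1/2 - a) * w)"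
    using w(2) by (simp add: powr_def algebra_simps)
  have eq: "exp ((1/2 - a) * w) * (1 - exp (- w)) = exp (- ((a + 1/2) * w)) * (exp w - 1)"
    by (simp add: algebra_simps exp_add[symmetric])
  have e1: "1 - exp (- w) > 0" using w by simp
  have "w = w * exp ((a + 1/2) * w) * exp (- ((a + 1/2) * w))"
    by (simp add: exp_minus field_simps)
  also have "\<dots> \<le> (exp 1 + 2 / (1/2 - a)) * (exp w - 1) * exp (- ((a + 1/2) * w))"
    using B by (intro mult_right_mono) auto
  also have "\<dots> = (exp 1 + 2 / (1/2 - a)) * (exp (- ((a + 1/2) * w)) * (exp w - 1))"
    by (simp only: mult.assoc mult.commute[of "exp w - 1"])
  also have "\<dots> = (exp 1 + 2 / (1/2 - a)) * exp ((1/2 - a) * w) * (1 - exp (- w))"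
    by (simp only: eq[symmetric] mult.assoc)
  finally have "w \<le> (exp 1 + 2 / (1/2 - a)) * exp ((1/2 - a) * w) * (1 - exp (- w))" .
  hence "w / (1 - exp (- w)) \<le> (exp 1 + 2 / (1/2 - a)) * exp ((1/2 - a) * w)"
    using e1 by (simp add: pos_divide_le_eq)
  moreover have "ln g / (g - 1) = w / (1 - exp (- w))"
  proof -
    have "ln g = - w" by (simp add: w_def)
    moreover have "g - 1 = - (1 - exp (- w))" using w(2) by simp
    ultimately show ?thesis by (simp only: minus_divide_divide)
  qed
  ultimately show ?thesis by (simp only: gp)
qed

lemma lemC0:
  fixes a u :: real
  assumes "0 < a" "0 \<le> u"
  shows "exp (- (a * u)) * (u\<^sup>2 + 4 * pi\<^sup>2) \<le> 4 / a\<^sup>2 + 4 * pi\<^sup>2"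
proof -
  have "1 + a * u / 2 \<le> exp (a * u / 2)" by (rule exp_ge_add_one_self)
  hence "a * u / 2 \<le> exp (a * u / 2)" by linarith
  hence "(a * u / 2)\<^sup>2 \<le> (exp (a * u / 2))\<^sup>2"
    using assms by (intro power_mono) auto
  also have "(exp (a * u / 2))\<^sup>2 = exp (a * u)" by (simp add: power2_eq_square exp_add[symmetric])
  finally have h: "a\<^sup>2 * u\<^sup>2 \<le> 4 * exp (a * u)" by (simp add: power_divide power_mult_distrib)
  have h1: "exp (- (a * u)) * u\<^sup>2 \<le> 4 / a\<^sup>2"
    using h assms by (simp add: exp_minus field_simps)
  have h2: "exp (- (a * u)) * (4 * pi\<^sup>2) \<le> 4 * pi\<^sup>2"
    using assms by (simp add: mult_le_cancel_right1)
  show ?thesis unfolding distrib_left using h1 h2 by linarith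
qed

lemma lemC1:
  fixes a g :: real
  assumes "0 < a" "0 < g" "g < 1"
  shows "g powr a * ((ln g)\<^sup>2 + 4 * pi\<^sup>2) \<le> 4 / a\<^sup>2 + 4 * pi\<^sup>2"
  using lemC0[of a "- ln g"] assms by (simp add: powr_def)

lemma lemC2:
  fixes a g :: real
  assumes "0 < a" "1 < g"
  shows "g powr (- a) * ((ln g)\<^sup>2 + 4 * pi\<^sup>2) \<le> 4 / a\<^sup>2 + 4 * pi\<^sup>2"
  using lemC0[of a "ln g"] assms by (simp add: powr_def)



lemma powr_sq_half:
  fixes r q :: real assumes "0 < r"
  shows "(r\<^sup>2 / 2) powr q = r powr (2 * q) / 2 powr q"
proof -
  have "r\<^sup>2 = r powr 2" using assms by (simp add: powr_numeral)
  hence "(r\<^sup>2) powr q = r powr (2 * q)" by (simp add: powr_powr)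
  thus ?thesis using assms by (simp add: powr_divide)
qed

lemma N1:
  fixes x phi :: real assumes "0 < x"
  shows "normal_prec_density x phi * hs_plus_gamma_density x
       = exp (- (phi\<^sup>2 / 2) * x) * (ln x / (x - 1)) / (sqrt (2 * pi) * pi\<^sup>2)"
proof -
  have "x powr (-1/2) = 1 / sqrt x" using assms
    by (simp add: powr_minus_divide powr_half_sqrt)
  moreover have "sqrt (x / (2 * pi)) = sqrt x / sqrt (2 * pi)" by (simp add: real_sqrt_divide)
  moreover have "exp (- x * phi\<^sup>2 / 2) = exp (- (phi\<^sup>2 / 2) * x)" by (simp add: algebra_simps)
  ultimately have "normal_prec_density x phi * hs_plus_gamma_density x =
     sqrt x / sqrt (2 * pi) * exp (- (phi\<^sup>2 / 2) * x) * (1 / sqrt x * ln x / (pi\<^sup>2 * (x - 1)))"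
    unfolding normal_prec_density_def hs_plus_gamma_density_def by simp
  also have "\<dots> = exp (- (phi\<^sup>2 / 2) * x) * (ln x / (x - 1)) / (sqrt (2 * pi) * pi\<^sup>2)"
    using assms by (cases "x = 1") (simp_all add: field_simps)
  finally show ?thesis .
qed

lemma N2:
  fixes x phi :: real assumes "0 < x"
  shows "normal_prec_density x phi * hths_plus_gamma_density x
       = exp (- (phi\<^sup>2 / 2) * x) * 2 / (sqrt (2 * pi) * sqrt x * ((ln x)\<^sup>2 + 4 * pi\<^sup>2))"
proof -
  have q: "(ln x)\<^sup>2 + 4 * pi\<^sup>2 > 0" by (simp add: add_nonneg_pos)
  have "sqrt (x / (2 * pi)) = sqrt x / sqrt (2 * pi)" by (simp add: real_sqrt_divide)
  moreover have "exp (- x * phi\<^sup>2 / 2) = exp (- (phi\<^sup>2 / 2) * x)" by (simp add: algebra_simps)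
  ultimately have "normal_prec_density x phi * hths_plus_gamma_density x =
     sqrt x / sqrt (2 * pi) * exp (- (phi\<^sup>2 / 2) * x) * (2 / (x * ((ln x)\<^sup>2 + 4 * pi\<^sup>2)))"
    unfolding normal_prec_density_def hths_plus_gamma_density_def by simp
  also have "\<dots> = exp (- (phi\<^sup>2 / 2) * x) * 2 / (sqrt (2 * pi) * (x / sqrt x) * ((ln x)\<^sup>2 + 4 * pi\<^sup>2))"
    using assms q by (simp add: field_simps)
  also have "x / sqrt x = sqrt x" using assms by (simp add: real_div_sqrt)
  finally show ?thesis .
qed



lemma hthsaux:
  fixes x p E Q e :: real
  assumes "0 < x" "0 < Q" "x powr p * Q \<le> E" "0 \<le> e"
  shows "x powr (p - 1/2) * e \<le> E * e / (sqrt x * Q)"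
proof -
  have sq: "sqrt x > 0" using assms by simp
  have "x powr (p - 1/2) = x powr p / sqrt x"
    using assms by (simp add: powr_diff powr_half_sqrt)
  moreover have "x powr p / sqrt x \<le> E / (sqrt x * Q)"
    using assms sq by (simp add: field_simps)
  ultimately have "x powr (p - 1/2) \<le> E / (sqrt x * Q)" by simp
  hence "x powr (p - 1/2) * e \<le> E / (sqrt x * Q) * e" by (rule mult_right_mono) (use assms in simp)
  thus ?thesis by simp
qed

lemma helpC:
  fixes K k e L :: real assumes "0 < K"
  shows "k * sqrt (2 * pi) * pi\<^sup>2 / K * (e * L / (sqrt (2 * pi) * pi\<^sup>2)) = k * (e * (L / K))"
  using assms by (simp add: field_simps)

lemma helpD:
  fixes Q sx k E e :: real assumes "0 < Q" "0 < sx"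
  shows "k * E * sqrt (2 * pi) / 2 * (e * 2 / (sqrt (2 * pi) * sx * Q)) = k * (E * e / (sx * Q))"
  using assms by (simp add: field_simps)

lemma meas_hs: "(\<lambda>x. c * (indicator {0<..} x * (normal_prec_density x phi * hs_plus_gamma_density x))) \<in> borel_measurable lborel"
  unfolding normal_prec_density_def hs_plus_gamma_density_def by measurable

lemma meas_hths: "(\<lambda>x. c * (indicator {0<..} x * (normal_prec_density x phi * hths_plus_gamma_density x))) \<in> borel_measurable lborel"
  unfolding normal_prec_density_def hths_plus_gamma_density_def by measurable



theorem theorem2:
  fixes a :: real
  assumes "0 < a" and "a < 1/2"
  shows "\<exists>C D. C > 0 \<and> D > 0 \<and>
    (\<forall>\<phi>::real. \<phi> \<noteq> 0 \<longrightarrow>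
      (let M = a * 2 powr (a - 1) / (sqrt pi * \<bar>\<phi>\<bar> powr (1 + 2 * a))
                 * lower_inc_gamma (1/2 + a) (\<phi>\<^sup>2 / 2)
             + a * 2 powr (- a - 1) / (sqrt pi * \<bar>\<phi>\<bar> powr (1 - 2 * a))
                 * upper_inc_gamma (1/2 - a) (\<phi>\<^sup>2 / 2)
       in C * f_HS_plus \<phi> \<le> M \<and> M \<le> D * f_HTHS_plus \<phi>))"
proof -
  define K where "K = exp 1 + 2 / (1/2 - a)"
  define k where "k = a * 2 powr (-3/2) / sqrt pi"
  define E where "E = 4 / a\<^sup>2 + 4 * pi\<^sup>2"
  define C where "C = k * sqrt (2 * pi) * pi\<^sup>2 / K"
  define D where "D = k * E * sqrt (2 * pi) / 2"
  have K: "K > 0" using assms K_def by (simp add: add_pos_pos)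
  have k: "k > 0" using assms k_def by simp
  have E: "E > 0" using E_def by (simp add: add_nonneg_pos)
  have C: "C > 0" unfolding C_def using K k by simp
  have D: "D > 0" unfolding D_def using k E by simp
  show ?thesis
  proof (intro exI conjI allI impI)
    show "C > 0" "D > 0" by (fact C, fact D)
    fix \<phi> :: real assume "\<phi> \<noteq> 0"
    define r where "r = \<bar>\<phi>\<bar>"
    have r: "r > 0" unfolding r_def using \<open>\<phi> \<noteq> 0\<close> by simp
    define s where "s = \<phi>\<^sup>2 / 2"
    have s: "s > 0" unfolding s_def using \<open>\<phi> \<noteq> 0\<close> by simp
    have sr: "s = r\<^sup>2 / 2" unfolding s_def r_def by simp
    define f1 where "f1 x = x powr (a - 1/2) * exp (- s * x)" for x
    define f2 where "f2 x = x powr (- a - 1/2) * exp (- s * x)" for x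
    define I1 where "I1 = (LBINT x:{0<..<1}. f1 x)"
    define I2 where "I2 = (LBINT x:{1<..}. f2 x)"
    define G where "G x = indicator {0<..<1} x * f1 x + indicator {1<..} x * f2 x" for x
    have si1: "set_integrable lborel {0<..<1} f1"
      unfolding f1_def
      by (rule set_integrable_subset[OF int_powr_exp]) (use assms s in auto)
    have si2: "set_integrable lborel {1<..} f2"
      unfolding f2_def
      by (rule set_integrable_subset[OF int_powr_exp]) (use assms s in auto)
    have Gint: "integrable lborel G"
      using si1 si2 unfolding G_def set_integrable_def by simp
    have intG: "integral\<^sup>L lborel G = I1 + I2"
      using si1 si2 unfolding G_def I1_def I2_def set_integrable_def set_lebesgue_integral_def
      by simp
    define M where "M = a * 2 powr (a - 1) / (sqrt pi * \<bar>\<phi>\<bar> powr (1 + 2 * a))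
                 * lower_inc_gamma (1/2 + a) (\<phi>\<^sup>2 / 2)
             + a * 2 powr (- a - 1) / (sqrt pi * \<bar>\<phi>\<bar> powr (1 - 2 * a))
                 * upper_inc_gamma (1/2 - a) (\<phi>\<^sup>2 / 2)"
    have L: "lower_inc_gamma (1/2 + a) (\<phi>\<^sup>2 / 2) = s powr (1/2 + a) * I1"
    proof -
      have e: "1/2 + a - 1 = a - 1/2" by simp
      show ?thesis using sub_lower[OF s, of "1/2 + a"] unfolding s_def I1_def f1_def e .
    qed
    have U: "upper_inc_gamma (1/2 - a) (\<phi>\<^sup>2 / 2) = s powr (1/2 - a) * I2"
    proof -
      have e: "1/2 - a - 1 = - a - 1/2" by simp
      show ?thesis using sub_upper[OF s, of "1/2 - a"] unfolding s_def I2_def f2_def e .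
    qed
    have c1: "a * 2 powr (a - 1) / (sqrt pi * r powr (1 + 2 * a)) * s powr (1/2 + a) = k"
    proof -
      have e: "2 * (1/2 + a) = 1 + 2 * a" by simp
      have "s powr (1/2 + a) = r powr (1 + 2 * a) / 2 powr (1/2 + a)"
        using powr_sq_half[OF r, of "1/2 + a"] unfolding sr e .
      moreover have "2 powr (a - 1) / 2 powr (1/2 + a) = (2::real) powr (-3/2)"
        by (simp add: powr_diff[symmetric])
      ultimately show ?thesis using r unfolding k_def by (simp add: field_simps)
    qed
    have c2: "a * 2 powr (- a - 1) / (sqrt pi * r powr (1 - 2 * a)) * s powr (1/2 - a) = k"
    proof -
      have e: "2 * (1/2 - a) = 1 - 2 * a" by simp
      have "s powr (1/2 - a) = r powr (1 - 2 * a) / 2 powr (1/2 - a)"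
        using powr_sq_half[OF r, of "1/2 - a"] unfolding sr e .
      moreover have "2 powr (- a - 1) / 2 powr (1/2 - a) = (2::real) powr (-3/2)"
        by (simp add: powr_diff[symmetric])
      ultimately show ?thesis using r unfolding k_def by (simp add: field_simps)
    qed
    have Meq: "M = k * integral\<^sup>L lborel G"
      unfolding M_def L U intG r_def[symmetric]
      using c1 c2 by (simp add: distrib_left mult.assoc[symmetric])
    show "let M = a * 2 powr (a - 1) / (sqrt pi * \<bar>\<phi>\<bar> powr (1 + 2 * a))
                 * lower_inc_gamma (1/2 + a) (\<phi>\<^sup>2 / 2)
             + a * 2 powr (- a - 1) / (sqrt pi * \<bar>\<phi>\<bar> powr (1 - 2 * a))
                 * upper_inc_gamma (1/2 - a) (\<phi>\<^sup>2 / 2)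
       in C * f_HS_plus \<phi> \<le> M \<and> M \<le> D * f_HTHS_plus \<phi>"
      unfolding Let_def M_def[symmetric]
    proof
      have fHS: "C * f_HS_plus \<phi> = integral\<^sup>L lborel
          (\<lambda>x. C * (indicator {0<..} x * (normal_prec_density x \<phi> * hs_plus_gamma_density x)))"
        by (simp add: f_HS_plus_def set_lebesgue_integral_def)
      have pw: "C * (indicator {0<..} x * (normal_prec_density x \<phi> * hs_plus_gamma_density x)) \<le> k * G x" for x
      proof (cases "x > 0")
        case False thus ?thesis by (simp add: G_def indicator_def)
      next
        case True
        have e: "C * (indicator {0<..} x * (normal_prec_density x \<phi> * hs_plus_gamma_density x))
              = k * (exp (- s * x) * ((ln x / (x - 1)) / K))"
        proof -
          have i: "indicator {0<..} x = (1::real)" using True by simp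
          show ?thesis unfolding i mult_1 N1[OF True] C_def s_def by (rule helpC[OF K])
        qed
        have ex: "exp (- s * x) \<ge> 0" by simp
        consider "x < 1" | "x = 1" | "x > 1" by linarith
        thus ?thesis
        proof cases
          case 1
          have h: "ln x / (x - 1) \<le> K * x powr (a - 1/2)"
            using lemA1[OF assms True 1] unfolding K_def[symmetric] .
          have "ln x / (x - 1) / K \<le> x powr (a - 1/2)"
          proof (subst pos_divide_le_eq[OF K])
            have "x powr (a - 1/2) * K = K * x powr (a - 1/2)" by (rule mult.commute)
            thus "ln x / (x - 1) \<le> x powr (a - 1/2) * K" using h by linarith
          qed
          hence "exp (- s * x) * ((ln x / (x - 1)) / K) \<le> exp (- s * x) * x powr (a - 1/2)"
            by (rule mult_left_mono) (rule ex)
          moreover have "f1 x = exp (- s * x) * x powr (a - 1/2)" unfolding f1_def by (rule mult.commute)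
          ultimately have "exp (- s * x) * ((ln x / (x - 1)) / K) \<le> f1 x" by linarith
          hence le: "k * (exp (- s * x) * ((ln x / (x - 1)) / K)) \<le> k * f1 x"
            by (rule mult_left_mono) (use k in simp)
          have "k * G x = k * f1 x" using 1 True by (simp add: G_def indicator_def)
          thus ?thesis using e le by linarith
        next
          case 2 thus ?thesis by (simp add: G_def indicator_def hs_plus_gamma_density_def)
        next
          case 3
          have h: "ln x / (x - 1) \<le> K * x powr (- a - 1/2)"
            using lemA2[OF assms 3] unfolding K_def[symmetric] .
          have "ln x / (x - 1) / K \<le> x powr (- a - 1/2)"
          proof (subst pos_divide_le_eq[OF K])
            have "x powr (- a - 1/2) * K = K * x powr (- a - 1/2)" by (rule mult.commute)
            thus "ln x / (x - 1) \<le> x powr (- a - 1/2) * K" using h by linarith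
          qed
          hence "exp (- s * x) * ((ln x / (x - 1)) / K) \<le> exp (- s * x) * x powr (- a - 1/2)"
            by (rule mult_left_mono) (rule ex)
          moreover have "f2 x = exp (- s * x) * x powr (- a - 1/2)" unfolding f2_def by (rule mult.commute)
          ultimately have "exp (- s * x) * ((ln x / (x - 1)) / K) \<le> f2 x" by linarith
          hence le: "k * (exp (- s * x) * ((ln x / (x - 1)) / K)) \<le> k * f2 x"
            by (rule mult_left_mono) (use k in simp)
          have "k * G x = k * f2 x" using 3 True by (simp add: G_def indicator_def)
          thus ?thesis using e le by linarith
        qed
      qed
      have Gnn: "0 \<le> G x" for x
        unfolding G_def f1_def f2_def by (simp add: indicator_def)
      have "C * f_HS_plus \<phi> \<le> integral\<^sup>L lborel (\<lambda>x. k * G x)"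
        unfolding fHS
        by (rule integral_mono') (use Gint pw Gnn k in auto)
      also have "\<dots> = M" using Meq by simp
      finally show "C * f_HS_plus \<phi> \<le> M" .
      define H where "H x = D * (indicator {0<..} x * (normal_prec_density x \<phi> * hths_plus_gamma_density x))" for x
      have fHT: "D * f_HTHS_plus \<phi> = integral\<^sup>L lborel H"
        unfolding H_def f_HTHS_plus_def set_lebesgue_integral_def by simp
      have Hx: "H x = k * (E * exp (- s * x) / (sqrt x * ((ln x)\<^sup>2 + 4 * pi\<^sup>2)))" if "x > 0" for x
      proof -
        have i: "indicator {0<..} x = (1::real)" using that by simp
        have q: "(ln x)\<^sup>2 + 4 * pi\<^sup>2 > 0" by (simp add: add_nonneg_pos)
        show ?thesis unfolding H_def i mult_1 N2[OF that] D_def s_def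
          by (rule helpD[OF q]) (use that in simp)
      qed
      have Q: "(ln x)\<^sup>2 + 4 * pi\<^sup>2 > 0" for x :: real by (simp add: add_nonneg_pos)
      have Hint: "integrable lborel H"
      proof (rule Bochner_Integration.integrable_bound[OF _ _ AE_I2])
        have "set_integrable lborel {0<..} (\<lambda>x. x powr (-1/2) * exp (- s * x))"
          by (rule int_powr_exp) (use s in auto)
        thus "integrable lborel (\<lambda>x. (k * E / (4 * pi\<^sup>2)) * (indicator {0<..} x * (x powr (-1/2) * exp (- s * x))))"
          unfolding set_integrable_def by simp
        show "H \<in> borel_measurable lborel" unfolding H_def by (rule meas_hths)
        fix x :: real
        show "norm (H x) \<le> norm ((k * E / (4 * pi\<^sup>2)) * (indicator {0<..} x * (x powr (-1/2) * exp (- s * x))))"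
        proof (cases "x > 0")
          case False thus ?thesis by (simp add: H_def indicator_def)
        next
          case True
          have sx: "sqrt x > 0" using True by simp
          have AB: "E * exp (- s * x) / (sqrt x * ((ln x)\<^sup>2 + 4 * pi\<^sup>2)) \<le> E * exp (- s * x) / (sqrt x * (4 * pi\<^sup>2))"
            using E sx Q[of x] by (intro divide_left_mono mult_left_mono mult_pos_pos) auto
          have A0: "0 \<le> E * exp (- s * x) / (sqrt x * ((ln x)\<^sup>2 + 4 * pi\<^sup>2))"
            using E sx Q[of x] by simp
          have R: "(k * E / (4 * pi\<^sup>2)) * (indicator {0<..} x * (x powr (-1/2) * exp (- s * x)))
              = k * (E * exp (- s * x) / (sqrt x * (4 * pi\<^sup>2)))"
            using True sx by (simp add: powr_minus_divide powr_half_sqrt field_simps)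
          have le: "k * (E * exp (- s * x) / (sqrt x * ((ln x)\<^sup>2 + 4 * pi\<^sup>2))) \<le> k * (E * exp (- s * x) / (sqrt x * (4 * pi\<^sup>2)))"
            by (rule mult_left_mono[OF AB]) (use k in simp)
          have nn: "0 \<le> k * (E * exp (- s * x) / (sqrt x * ((ln x)\<^sup>2 + 4 * pi\<^sup>2)))"
            using A0 k by (intro mult_nonneg_nonneg) auto
          have n0: "\<bar>k * (E * exp (- s * x) / (sqrt x * ((ln x)\<^sup>2 + 4 * pi\<^sup>2)))\<bar> \<le> k * (E * exp (- s * x) / (sqrt x * (4 * pi\<^sup>2)))" unfolding abs_of_nonneg[OF nn] by (rule le)
          have n: "norm (k * (E * exp (- s * x) / (sqrt x * ((ln x)\<^sup>2 + 4 * pi\<^sup>2)))) \<le> norm (k * (E * exp (- s * x) / (sqrt x * (4 * pi\<^sup>2))))" unfolding real_norm_def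
            using n0 abs_ge_self[of "k * (E * exp (- s * x) / (sqrt x * (4 * pi\<^sup>2)))"] by (rule order_trans)
          show ?thesis unfolding Hx[OF True] R using n .
        qed
      qed
      have pw: "k * G x \<le> H x" for x
      proof (cases "x > 0")
        case False thus ?thesis by (simp add: G_def H_def indicator_def)
      next
        case True
        have ex: "exp (- s * x) \<ge> 0" by simp
        consider "x < 1" | "x = 1" | "x > 1" by linarith
        thus ?thesis
        proof cases
          case 1
          have "f1 x \<le> E * exp (- s * x) / (sqrt x * ((ln x)\<^sup>2 + 4 * pi\<^sup>2))"
            unfolding f1_def
            by (rule hthsaux[OF True Q]) (use lemC1[OF assms(1) True 1] E_def in auto)
          hence le: "k * f1 x \<le> k * (E * exp (- s * x) / (sqrt x * ((ln x)\<^sup>2 + 4 * pi\<^sup>2)))" by (rule mult_left_mono) (use k in simp)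
          have "k * G x = k * f1 x" using 1 True by (simp add: G_def indicator_def)
          thus ?thesis using le Hx[OF True] by linarith
        next
          case 2
          have "0 \<le> k * (E * exp (- s * x) / (sqrt x * ((ln x)\<^sup>2 + 4 * pi\<^sup>2)))" using k E Q[of x] True by simp
          moreover have "k * G x = 0" using 2 by (simp add: G_def indicator_def)
          ultimately show ?thesis using Hx[OF True] by linarith
        next
          case 3
          have "f2 x \<le> E * exp (- s * x) / (sqrt x * ((ln x)\<^sup>2 + 4 * pi\<^sup>2))"
            unfolding f2_def
            by (rule hthsaux[OF True Q]) (use lemC2[OF assms(1) 3] E_def in auto)
          hence le: "k * f2 x \<le> k * (E * exp (- s * x) / (sqrt x * ((ln x)\<^sup>2 + 4 * pi\<^sup>2)))" by (rule mult_left_mono) (use k in simp)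
          have "k * G x = k * f2 x" using 3 True by (simp add: G_def indicator_def)
          thus ?thesis using le Hx[OF True] by linarith
        qed
      qed
      have "M = integral\<^sup>L lborel (\<lambda>x. k * G x)" using Meq by simp
      also have "\<dots> \<le> integral\<^sup>L lborel H"
        by (rule integral_mono) (use Gint Hint pw in auto)
      finally show "M \<le> D * f_HTHS_plus \<phi>" using fHT by simp
    qed
  qed
qed


end
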